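(* Let $d\ge2$, $\alpha\in\mathbb{R}$, and $f=x^{d-1}(\alpha x+dy)$, a real binary form of degree $d$. Then $f$ has real symmetric rank $d$, and its decompositions as a sum of $d$ real symmetric rank one terms are exactly (up to reordering) the expressions $$f=\sum_{i=1}^d\frac{(\lambda_ix+y)^d}{\prod_{j\ne i}(\lambda_i-\lambda_j)},$$ where $\lambda_1,\dots,\lambda_d\in\mathbb{R}$ are distinct and $\alpha=\lambda_1+\cdots+\lambda_d$.
   Context: Binary forms of degree $d$ are identified with symmetric tensors in $(\mathbb{R}^2)^{\otimes d}$ via $\mathcal{T}\leftrightarrow\sum_k\mathcal{T}(k_1|\dots|k_d)x_{k_1}\cdots x_{k_d}$ with $x_1=x$, $x_2=y$. A symmetric rank one term is $c\,\ell^d$ with $c\in\mathbb{R}$ and $\ell$ a real linear form; the symmetric rank is the minimal number of such terms summing to the form. *)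

theory Defs
  imports Complex_Main "HOL-Library.Multiset"
begin

text \<open>A real binary form of degree d is represented by its polynomial function
  \<open>real \<Rightarrow> real \<Rightarrow> real\<close> in the variables x, y (over the infinite field R a form
  is determined by its values). A symmetric rank one term c * (a x + b y)^d is
  given by a triple (c, a, b).\<close>

definition rank_one_term :: "nat \<Rightarrow> real \<times> real \<times> real \<Rightarrow> (real \<Rightarrow> real \<Rightarrow> real)" where
  "rank_one_term d t = (case t of (c, a, b) \<Rightarrow> (\<lambda>x y. c * (a * x + b * y) ^ d))"

definition is_sym_decomp :: "nat \<Rightarrow> (real \<Rightarrow> real \<Rightarrow> real) \<Rightarrow> (real \<times> real \<times> real) list \<Rightarrow> bool" where
  "is_sym_decomp d f ts \<longleftrightarrow> (\<forall>x y. f x y = (\<Sum>t\<leftarrow>ts. rank_one_term d t x y))"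

definition real_sym_rank :: "nat \<Rightarrow> (real \<Rightarrow> real \<Rightarrow> real) \<Rightarrow> nat" where
  "real_sym_rank d f = (LEAST r. \<exists>ts. length ts = r \<and> is_sym_decomp d f ts)"

end

theory Submission
  imports Defs "HOL-Computational_Algebra.Polynomial"
begin

lemma prod_lin_deg:
  fixes mu :: "'b \<Rightarrow> real"
  assumes "finite A"
  shows "degree (\<Prod>j\<in>A. [:-mu j, 1:]) = card A"
    "lead_coeff (\<Prod>j\<in>A. [:-mu j, 1:]) = 1"
proof -
  have "degree (\<Prod>j\<in>A. [:-mu j, 1:]) = (\<Sum>j\<in>A. degree [:-mu j, 1:])"
    by (rule degree_prod_eq_sum_degree) auto
  then show "degree (\<Prod>j\<in>A. [:-mu j, 1:]) = card A" by simp
  show "lead_coeff (\<Prod>j\<in>A. [:-mu j, 1:]) = 1"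
    by (simp add: lead_coeff_prod)
qed

lemma prod_lin_coeff:
  fixes mu :: "'b \<Rightarrow> real"
  assumes "finite A"
  shows "coeff (\<Prod>j\<in>A. [:-mu j, 1:]) (card A - 1) = (if A = {} then 1 else - (\<Sum>j\<in>A. mu j))"
  using assms
proof (induction A rule: finite_induct)
  case empty
  then show ?case by simp
next
  case (insert a A)
  define p where "p = (\<Prod>j\<in>A. [:-mu j, 1:])"
  have "(\<Prod>j\<in>insert a A. [:-mu j, 1:]) = [:-mu a, 1:] * p"
    using insert by (simp add: p_def)
  also have "\<dots> = smult (- mu a) p + pCons 0 p"
    by (simp add: mult_pCons_left)
  finally have e: "(\<Prod>j\<in>insert a A. [:-mu j, 1:]) = smult (- mu a) p + pCons 0 p" .
  have ci: "card (insert a A) = Suc (card A)" using insert by simp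
  show ?case
  proof (cases "A = {}")
    case True
    then show ?thesis by simp
  next
    case False
    then obtain m where c: "card A = Suc m" using insert card_gt_0_iff
      by (metis gr0_implies_Suc)
    have "coeff p (card A) = 1" using prod_lin_deg[OF insert(1), of mu] by (simp add: p_def)
    moreover have "coeff p m = - (\<Sum>j\<in>A. mu j)" using insert.IH False c by (simp add: p_def)
    ultimately show ?thesis using insert False unfolding e ci c
      by simp
  qed
qed

lemma lagrange:
  fixes lam :: "nat \<Rightarrow> real" and P :: "real poly"
  assumes inj: "inj_on lam {..<d}" and d: "d \<ge> 1" and deg: "degree P < d"
  shows "(\<Sum>i<d. poly P (lam i) / (\<Prod>j\<in>{..<d}-{i}. (lam i - lam j))) = coeff P (d-1)"
proof -
  define L where "L i = (\<Prod>j\<in>{..<d}-{i}. [:-lam j,1:])" for i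
  define D where "D i = (\<Prod>j\<in>{..<d}-{i}. (lam i - lam j))" for i
  have Lpoly: "poly (L i) x = (\<Prod>j\<in>{..<d}-{i}. (x - lam j))" for i x
    by (simp add: L_def poly_prod)
  have Dnz: "D i \<noteq> 0" if "i < d" for i
    using inj that unfolding D_def by (auto simp: inj_on_def)
  have Lk: "poly (L i) (lam k) = 0" if "k < d" "k \<noteq> i" for i k
    unfolding Lpoly using that by (intro prod_zero) auto
  have Li: "poly (L i) (lam i) = D i" for i
    unfolding Lpoly D_def ..
  have cL: "coeff (L i) (d-1) = 1" if "i < d" for i
  proof -
    have "card ({..<d}-{i}) = d - 1" using that by simp
    then show ?thesis using prod_lin_deg[of "{..<d}-{i}" lam] unfolding L_def by simp
  qed
  have degL: "degree (L i) < d" if "i < d" for i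
  proof -
    have "card ({..<d}-{i}) = d - 1" using that by simp
    then show ?thesis using prod_lin_deg[of "{..<d}-{i}" lam] d unfolding L_def by simp
  qed
  define Q where "Q = P - (\<Sum>i<d. smult (poly P (lam i) / D i) (L i))"
  have rootQ: "poly Q (lam k) = 0" if "k < d" for k
  proof -
    have "(\<Sum>i<d. poly P (lam i) / D i * poly (L i) (lam k))
        = poly P (lam k) / D k * poly (L k) (lam k) + (\<Sum>i\<in>{..<d}-{k}. poly P (lam i) / D i * poly (L i) (lam k))"
      using that by (subst sum.remove[of _ k]) auto
    also have "(\<Sum>i\<in>{..<d}-{k}. poly P (lam i) / D i * poly (L i) (lam k)) = 0"
      using that Lk by (intro sum.neutral) auto
    finally show ?thesis using Dnz[OF that] unfolding Q_def by (simp add: poly_sum Li)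
  qed
  have cQ: "coeff Q n = 0" if "n \<ge> d" for n
  proof -
    have "coeff P n = 0" using deg that by (intro coeff_eq_0) auto
    moreover have "coeff (L i) n = 0" if "i < d" for i using degL[OF that] \<open>n \<ge> d\<close> by (intro coeff_eq_0) auto
    ultimately show ?thesis unfolding Q_def by (simp add: coeff_sum)
  qed
  have "Q = 0"
  proof (rule ccontr)
    assume "Q \<noteq> 0"
    have "degree Q \<le> d - 1" using cQ by (intro degree_le) auto
    moreover have "card {x. poly Q x = 0} \<le> degree Q" using \<open>Q \<noteq> 0\<close> by (rule card_poly_roots_bound)
    moreover have "card (lam ` {..<d}) \<le> card {x. poly Q x = 0}"
      using rootQ poly_roots_finite[OF \<open>Q \<noteq> 0\<close>] by (intro card_mono) auto
    moreover have "card (lam ` {..<d}) = d" using inj by (simp add: card_image)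
    ultimately show False using d by linarith
  qed
  then have "coeff Q (d-1) = 0" by simp
  then have "coeff P (d-1) = (\<Sum>i<d. poly P (lam i) / D i * coeff (L i) (d-1))"
    unfolding Q_def by (simp add: coeff_sum)
  also have "\<dots> = (\<Sum>i<d. poly P (lam i) / D i)" using cL by simp
  finally show ?thesis unfolding D_def by simp
qed

lemma psum_low:
  fixes lam :: "nat \<Rightarrow> real"
  assumes inj: "inj_on lam {..<d}" and d: "d \<ge> 1" and k: "k < d"
  shows "(\<Sum>i<d. lam i ^ k / (\<Prod>j\<in>{..<d}-{i}. (lam i - lam j))) = (if k = d - 1 then 1 else 0)"
  using lagrange[OF inj d, of "monom 1 k"] k by (simp add: poly_monom degree_monom_eq coeff_monom)

lemma psum_top:
  fixes lam :: "nat \<Rightarrow> real"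
  assumes inj: "inj_on lam {..<d}" and d: "d \<ge> 1"
  shows "(\<Sum>i<d. lam i ^ d / (\<Prod>j\<in>{..<d}-{i}. (lam i - lam j))) = (\<Sum>i<d. lam i)"
proof -
  define R where "R = (\<Prod>j\<in>{..<d}. [:-lam j,1:])"
  define P where "P = monom 1 d - R"
  have dR: "degree R = d" "lead_coeff R = 1" using prod_lin_deg[of "{..<d}" lam] unfolding R_def by auto
  have "coeff P n = 0" if "n \<ge> d" for n
  proof (cases "n = d")
    case True then show ?thesis using dR unfolding P_def by (simp add: coeff_monom)
  next
    case False
    then have "coeff R n = 0" using that dR by (intro coeff_eq_0) auto
    then show ?thesis using False unfolding P_def by (simp add: coeff_monom)
  qed
  then have "degree P \<le> d - 1" by (intro degree_le) auto
  then have degP: "degree P < d" using d by linarith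
  have cR: "coeff R (d-1) = - (\<Sum>i<d. lam i)" using prod_lin_coeff[of "{..<d}" lam] d unfolding R_def by auto
  have cP: "coeff P (d-1) = (\<Sum>i<d. lam i)" using cR d unfolding P_def by (simp add: coeff_monom)
  have pP: "poly P (lam i) = lam i ^ d" if "i < d" for i
  proof -
    have "poly R (lam i) = 0" unfolding R_def poly_prod using that by (intro prod_zero) auto
    then show ?thesis unfolding P_def by (simp add: poly_monom)
  qed
  have "(\<Sum>i<d. lam i ^ d / (\<Prod>j\<in>{..<d}-{i}. (lam i - lam j)))
      = (\<Sum>i<d. poly P (lam i) / (\<Prod>j\<in>{..<d}-{i}. (lam i - lam j)))" using pP by simp
  also have "\<dots> = coeff P (d-1)" by (rule lagrange[OF inj d degP])
  finally show ?thesis using cP by simp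
qed

lemma functional:
  fixes lam w :: "nat \<Rightarrow> real" and P :: "real poly"
  assumes mom: "\<forall>k<d. (\<Sum>i<n. w i * lam i ^ k) = (if k = d - 1 then 1 else 0)"
    and deg: "degree P < d"
  shows "(\<Sum>i<n. w i * poly P (lam i)) = coeff P (d-1)"
proof -
  have pe: "poly P x = (\<Sum>k<d. coeff P k * x ^ k)" for x
  proof -
    have "poly P x = (\<Sum>k\<le>degree P. coeff P k * x ^ k)" by (rule poly_altdef)
    also have "\<dots> = (\<Sum>k<d. coeff P k * x ^ k)"
      using deg by (intro sum.mono_neutral_left) (auto simp: coeff_eq_0)
    finally show ?thesis .
  qed
  have "(\<Sum>i<n. w i * poly P (lam i)) = (\<Sum>i<n. \<Sum>k<d. coeff P k * (w i * lam i ^ k))"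
    unfolding pe by (simp add: sum_distrib_left mult_ac)
  also have "\<dots> = (\<Sum>k<d. coeff P k * (\<Sum>i<n. w i * lam i ^ k))"
    by (subst sum.swap) (simp add: sum_distrib_left)
  also have "\<dots> = (\<Sum>k<d. coeff P k * (if k = d - 1 then 1 else 0))"
    using mom by simp
  also have "\<dots> = (\<Sum>k<d. (if k = d - 1 then coeff P k else 0))"
    by (intro sum.cong) auto
  also have "\<dots> = coeff P (d-1)"
    using deg by (subst sum.delta) auto
  finally show ?thesis .
qed

definition mom :: "nat \<Rightarrow> (real \<times> real \<times> real) list \<Rightarrow> nat \<Rightarrow> real" where
  "mom d ts k = (\<Sum>i<length ts. fst (ts!i) * fst (snd (ts!i)) ^ k * snd (snd (ts!i)) ^ (d-k))"

definition tgt :: "nat \<Rightarrow> real \<Rightarrow> nat \<Rightarrow> real" where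
  "tgt d \<alpha> k = (if k = d then \<alpha> else if k = d - 1 then 1 else 0)"

lemma term_expand:
  "rank_one_term d t x y = (\<Sum>k\<le>d. of_nat (d choose k) * x^k * y^(d-k) * (fst t * fst (snd t) ^ k * snd (snd t) ^ (d-k)))"
proof -
  obtain c a b where t: "t = (c, a, b)" by (cases t) auto
  have "rank_one_term d t x y = c * (a * x + b * y) ^ d" by (simp add: t rank_one_term_def)
  also have "\<dots> = c * (\<Sum>k\<le>d. of_nat (d choose k) * (a*x)^k * (b*y)^(d-k))" by (simp add: binomial_ring)
  also have "\<dots> = (\<Sum>k\<le>d. of_nat (d choose k) * x^k * y^(d-k) * (c * a ^ k * b ^ (d-k)))"
    by (simp add: sum_distrib_left power_mult_distrib mult_ac)
  finally show ?thesis by (simp add: t)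
qed

lemma list_expand:
  "(\<Sum>t\<leftarrow>ts. rank_one_term d t x y) = (\<Sum>k\<le>d. of_nat (d choose k) * x^k * y^(d-k) * mom d ts k)"
proof -
  have "(\<Sum>t\<leftarrow>ts. rank_one_term d t x y) = (\<Sum>i<length ts. rank_one_term d (ts!i) x y)"
    by (simp add: sum_list_sum_nth atLeast0LessThan)
  also have "\<dots> = (\<Sum>i<length ts. \<Sum>k\<le>d. of_nat (d choose k) * x^k * y^(d-k) * (fst (ts!i) * fst (snd (ts!i)) ^ k * snd (snd (ts!i)) ^ (d-k)))"
    by (simp add: term_expand)
  also have "\<dots> = (\<Sum>k\<le>d. of_nat (d choose k) * x^k * y^(d-k) * mom d ts k)"
    by (subst sum.swap) (simp add: mom_def sum_distrib_left)
  finally show ?thesis .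
qed

lemma f_expand:
  assumes d: "d \<ge> 1"
  shows "x ^ (d - 1) * (\<alpha> * x + real d * y) = (\<Sum>k\<le>d. of_nat (d choose k) * x^k * y^(d-k) * tgt d \<alpha> k)"
proof -
  have pw: "of_nat (d choose k) * x^k * y^(d-k) * tgt d \<alpha> k =
      (if k = d then \<alpha> * x ^ d else 0) + (if k = d - 1 then real d * x^(d-1) * y else 0)" for k
  proof (cases "k = d")
    case True then show ?thesis using d by (simp add: tgt_def)
  next
    case False
    show ?thesis
    proof (cases "k = d - 1")
      case True
      then have "d - k = 1" using d by simp
      moreover have "d choose k = d"
      proof -
        have "d choose k = d choose (d - k)" using True by (intro binomial_symmetric) simp
        then show ?thesis using \<open>d - k = 1\<close> by simp
      qed
      ultimately show ?thesis using True False by (simp add: tgt_def)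
    qed (use False in \<open>simp add: tgt_def\<close>)
  qed
  have "(\<Sum>k\<le>d. of_nat (d choose k) * x^k * y^(d-k) * tgt d \<alpha> k) =
    (\<Sum>k\<le>d. (if k = d then \<alpha> * x ^ d else 0)) + (\<Sum>k\<le>d. (if k = d - 1 then real d * x^(d-1) * y else 0))"
    unfolding pw by (simp add: sum.distrib)
  also have "\<dots> = \<alpha> * x ^ d + real d * x^(d-1) * y" by (simp add: sum.delta)
  also have "\<dots> = x ^ (d - 1) * (\<alpha> * x + real d * y)"
    using d by (cases d) (auto simp: algebra_simps)
  finally show ?thesis by simp
qed

lemma coeff_compare:
  assumes "\<forall>x y::real. (\<Sum>k\<le>d. of_nat (d choose k) * x^k * y^(d-k) * A k) = (\<Sum>k\<le>d. of_nat (d choose k) * x^k * y^(d-k) * B k)"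
    and "k \<le> d"
  shows "A k = B k"
proof -
  define Q where "Q = (\<Sum>j\<le>d. monom (of_nat (d choose j) * (A j - B j)) j)"
  have "poly Q x = 0" for x
  proof -
    have "poly Q x = (\<Sum>j\<le>d. of_nat (d choose j) * x^j * 1^(d-j) * A j) - (\<Sum>j\<le>d. of_nat (d choose j) * x^j * 1^(d-j) * B j)"
      unfolding Q_def by (simp add: poly_sum poly_monom sum_subtractf[symmetric] algebra_simps)
    then show ?thesis using assms(1)[rule_format, of x 1] by simp
  qed
  then have "Q = 0" using poly_all_0_iff_0 by blast
  then have "coeff Q k = 0" by simp
  then have "of_nat (d choose k) * (A k - B k) = 0"
    unfolding Q_def coeff_sum coeff_monom using assms(2) by (simp add: sum.delta)
  then show ?thesis using assms(2) by simp
qed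

lemma decomp_iff:
  assumes d: "d \<ge> 1"
  shows "is_sym_decomp d (\<lambda>x y. x ^ (d - 1) * (\<alpha> * x + real d * y)) ts \<longleftrightarrow> (\<forall>k\<le>d. mom d ts k = tgt d \<alpha> k)"
proof
  assume "is_sym_decomp d (\<lambda>x y. x ^ (d - 1) * (\<alpha> * x + real d * y)) ts"
  then have "\<forall>x y. (\<Sum>k\<le>d. of_nat (d choose k) * x^k * y^(d-k) * mom d ts k) = (\<Sum>k\<le>d. of_nat (d choose k) * x^k * y^(d-k) * tgt d \<alpha> k)"
    unfolding is_sym_decomp_def list_expand f_expand[OF d] by simp
  then show "\<forall>k\<le>d. mom d ts k = tgt d \<alpha> k" using coeff_compare by blast
next
  assume "\<forall>k\<le>d. mom d ts k = tgt d \<alpha> k"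
  then show "is_sym_decomp d (\<lambda>x y. x ^ (d - 1) * (\<alpha> * x + real d * y)) ts"
    unfolding is_sym_decomp_def list_expand f_expand[OF d] by simp
qed

definition wt :: "nat \<Rightarrow> real \<times> real \<times> real \<Rightarrow> real" where
  "wt d t = fst t * snd (snd t) ^ d"
definition lt :: "real \<times> real \<times> real \<Rightarrow> real" where
  "lt t = fst (snd t) / snd (snd t)"

lemma wlam:
  assumes "k < d"
  shows "fst t * fst (snd t) ^ k * snd (snd t) ^ (d-k) = wt d t * lt t ^ k"
proof -
  obtain c a b where t: "t = (c, a, b)" by (cases t) auto
  show ?thesis
  proof (cases "b = 0")
    case True then show ?thesis using assms by (simp add: t wt_def lt_def zero_power)
  next
    case False
    have "b ^ d = b ^ k * b ^ (d - k)" using assms by (simp add: power_add[symmetric])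
    then show ?thesis using False by (simp add: t wt_def lt_def power_divide field_simps)
  qed
qed

lemma mom_low:
  assumes "\<forall>k\<le>d. mom d ts k = tgt d \<alpha> k"
  shows "\<forall>k<d. (\<Sum>i<length ts. wt d (ts!i) * lt (ts!i) ^ k) = (if k = d - 1 then 1 else 0)"
proof (intro allI impI)
  fix k assume k: "k < d"
  have "(\<Sum>i<length ts. wt d (ts!i) * lt (ts!i) ^ k) = mom d ts k"
    unfolding mom_def using wlam[OF k] by simp
  also have "\<dots> = tgt d \<alpha> k" using assms k by simp
  finally show "(\<Sum>i<length ts. wt d (ts!i) * lt (ts!i) ^ k) = (if k = d - 1 then 1 else 0)"
    using k by (simp add: tgt_def)
qed

lemma lower:
  assumes d: "d \<ge> 1" and m: "\<forall>k\<le>d. mom d ts k = tgt d \<alpha> k"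
  shows "d \<le> card ((\<lambda>i. lt (ts!i)) ` {i. i < length ts \<and> wt d (ts!i) \<noteq> 0})"
proof (rule ccontr)
  define \<Lambda> where "\<Lambda> = (\<lambda>i. lt (ts!i)) ` {i. i < length ts \<and> wt d (ts!i) \<noteq> 0}"
  assume "\<not> d \<le> card ((\<lambda>i. lt (ts!i)) ` {i. i < length ts \<and> wt d (ts!i) \<noteq> 0})"
  then have cl: "card \<Lambda> < d" unfolding \<Lambda>_def by simp
  have fin: "finite \<Lambda>" unfolding \<Lambda>_def by simp
  define R where "R = (\<Prod>\<mu>\<in>\<Lambda>. [:-\<mu>,1:])"
  define P where "P = monom 1 (d - 1 - card \<Lambda>) * R"
  have dR: "degree R = card \<Lambda>" "lead_coeff R = 1" using prod_lin_deg[OF fin, of "\<lambda>x. x"] unfolding R_def by auto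
  then have "R \<noteq> 0" by auto
  then have degP: "degree P = d - 1" unfolding P_def using dR cl
    by (subst degree_mult_eq) (auto simp: degree_monom_eq)
  have "lead_coeff P = 1" unfolding P_def lead_coeff_mult using dR by (simp add: degree_monom_eq)
  then have cP: "coeff P (d-1) = 1" using degP by simp
  have "(\<Sum>i<length ts. wt d (ts!i) * poly P (lt (ts!i))) = coeff P (d-1)"
    by (rule functional[OF mom_low[OF m]]) (use degP d in simp)
  moreover have "(\<Sum>i<length ts. wt d (ts!i) * poly P (lt (ts!i))) = 0"
  proof (intro sum.neutral ballI)
    fix i assume i: "i \<in> {..<length ts}"
    show "wt d (ts!i) * poly P (lt (ts!i)) = 0"
    proof (cases "wt d (ts!i) = 0")
      case False
      then have "lt (ts!i) \<in> \<Lambda>" using i unfolding \<Lambda>_def by auto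
      then have "poly R (lt (ts!i)) = 0" unfolding R_def poly_prod using fin by (intro prod_zero) auto
      then show ?thesis unfolding P_def by simp
    qed simp
  qed
  ultimately show False using cP by simp
qed

definition Dp :: "(nat \<Rightarrow> real) \<Rightarrow> nat \<Rightarrow> nat \<Rightarrow> real" where
  "Dp lam d i = (\<Prod>j\<in>{..<d}-{i}. (lam i - lam j))"
definition tsof :: "nat \<Rightarrow> (nat \<Rightarrow> real) \<Rightarrow> (real \<times> real \<times> real) list" where
  "tsof d lam = map (\<lambda>i. (1 / Dp lam d i, lam i, 1)) [0..<d]"

lemma tsof_decomp:
  assumes d: "d \<ge> 1" and inj: "inj_on lam {..<d}" and s: "(\<Sum>i<d. lam i) = \<alpha>"
  shows "is_sym_decomp d (\<lambda>x y. x ^ (d - 1) * (\<alpha> * x + real d * y)) (tsof d lam)"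
  unfolding decomp_iff[OF d]
proof (intro allI impI)
  fix k assume k: "k \<le> d"
  have "mom d (tsof d lam) k = (\<Sum>i<d. lam i ^ k / Dp lam d i)"
    unfolding mom_def tsof_def by simp
  also have "\<dots> = tgt d \<alpha> k"
  proof (cases "k = d")
    case True then show ?thesis using psum_top[OF inj d] s by (simp add: Dp_def tgt_def)
  next
    case False then show ?thesis using psum_low[OF inj d, of k] k d by (simp add: Dp_def tgt_def)
  qed
  finally show "mom d (tsof d lam) k = tgt d \<alpha> k" .
qed

lemma tsof_mset:
  "mset (map (rank_one_term d) (tsof d lam)) =
   image_mset (\<lambda>i. \<lambda>x y. (lam i * x + y) ^ d / (\<Prod>j\<in>{..<d} - {i}. (lam i - lam j))) (mset [0..<d])"
  unfolding tsof_def mset_map map_map image_mset.compositionality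
  by (intro image_mset_cong ext) (simp add: rank_one_term_def Dp_def)

lemma sum_via_mset:
  "(\<Sum>t\<leftarrow>ts. rank_one_term d t x y) = sum_mset (image_mset (\<lambda>g. g x y) (mset (map (rank_one_term d) ts)))"
  by (induction ts) auto

lemma sum_nat_real: "(\<Sum>i<d. real i) * 2 = real d * (real d - 1)"
  by (induction d) (auto simp: algebra_simps)

theorem lemma3p18:
  fixes d :: nat and \<alpha> :: real
  assumes "d \<ge> 2"
  shows "real_sym_rank d (\<lambda>x y. x ^ (d - 1) * (\<alpha> * x + real d * y)) = d \<and>
    (\<forall>ts. length ts = d \<longrightarrow>
      (is_sym_decomp d (\<lambda>x y. x ^ (d - 1) * (\<alpha> * x + real d * y)) ts \<longleftrightarrow>
       (\<exists>lam :: nat \<Rightarrow> real. inj_on lam {..<d} \<and> (\<Sum>i<d. lam i) = \<alpha> \<and>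
          mset (map (rank_one_term d) ts) =
          image_mset (\<lambda>i. \<lambda>x y. (lam i * x + y) ^ d / (\<Prod>j\<in>{..<d} - {i}. (lam i - lam j)))
            (mset [0..<d]))))"
proof -
  define f where "f = (\<lambda>x y::real. x ^ (d - 1) * (\<alpha> * x + real d * y))"
  have d1: "d \<ge> 1" using assms by simp
  have lowlen: "d \<le> length ts" if dec: "is_sym_decomp d f ts" for ts
  proof -
    have m: "\<forall>k\<le>d. mom d ts k = tgt d \<alpha> k" using dec decomp_iff[OF d1] unfolding f_def by blast
    have "d \<le> card ((\<lambda>i. lt (ts!i)) ` {i. i < length ts \<and> wt d (ts!i) \<noteq> 0})"
      by (rule lower[OF d1 m])
    also have "\<dots> \<le> card {i. i < length ts \<and> wt d (ts!i) \<noteq> 0}" by (rule card_image_le) simp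
    also have "\<dots> \<le> card {..<length ts}" by (intro card_mono) auto
    finally show ?thesis by simp
  qed
  define lam0 where "lam0 i = \<alpha> / real d + (real i - (real d - 1) / 2)" for i
  have inj0: "inj_on lam0 {..<d}" unfolding lam0_def inj_on_def by simp
  have s0: "(\<Sum>i<d. lam0 i) = \<alpha>"
  proof -
    have "(\<Sum>i<d. lam0 i) = real d * (\<alpha> / real d) + (\<Sum>i<d. real i) - real d * ((real d - 1) / 2)"
      unfolding lam0_def by (simp add: sum.distrib sum_subtractf)
    also have "\<dots> = \<alpha>" using sum_nat_real[of d] d1 by (simp add: field_simps)
    finally show ?thesis .
  qed
  have ex: "is_sym_decomp d f (tsof d lam0)" unfolding f_def by (rule tsof_decomp[OF d1 inj0 s0])
  have len0: "length (tsof d lam0) = d" by (simp add: tsof_def)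
  have rank: "real_sym_rank d f = d"
    unfolding real_sym_rank_def
  proof (rule Least_equality)
    show "\<exists>ts. length ts = d \<and> is_sym_decomp d f ts" using ex len0 by blast
  next
    fix y assume "\<exists>ts. length ts = y \<and> is_sym_decomp d f ts"
    then show "d \<le> y" using lowlen by blast
  qed
  have iff: "is_sym_decomp d f ts \<longleftrightarrow>
       (\<exists>lam :: nat \<Rightarrow> real. inj_on lam {..<d} \<and> (\<Sum>i<d. lam i) = \<alpha> \<and>
          mset (map (rank_one_term d) ts) =
          image_mset (\<lambda>i. \<lambda>x y. (lam i * x + y) ^ d / (\<Prod>j\<in>{..<d} - {i}. (lam i - lam j)))
            (mset [0..<d]))" if len: "length ts = d" for ts
  proof
    assume dec: "is_sym_decomp d f ts"
    have m: "\<forall>k\<le>d. mom d ts k = tgt d \<alpha> k" using dec decomp_iff[OF d1] unfolding f_def by blast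
    define lamt where "lamt i = lt (ts!i)" for i
    define W where "W = {i. i < d \<and> wt d (ts!i) \<noteq> 0}"
    have "d \<le> card (lamt ` W)" unfolding lamt_def W_def using lower[OF d1 m] len by simp
    moreover have "card (lamt ` W) \<le> card W" unfolding W_def by (rule card_image_le) simp
    moreover have "card W \<le> d" unfolding W_def
      using card_mono[of "{..<d}" "{i. i < d \<and> wt d (ts!i) \<noteq> 0}"] by auto
    ultimately have cW: "card W = d" and cI: "card (lamt ` W) = card W" by linarith+
    have finW: "finite W" unfolding W_def by simp
    have Wall: "W = {..<d}"
      by (rule card_subset_eq) (use cW in \<open>auto simp: W_def\<close>)
    have wnz: "wt d (ts!i) \<noteq> 0" if "i < d" for i using Wall that unfolding W_def by auto
    have inj: "inj_on lamt {..<d}" using cI finW Wall inj_on_iff_eq_card by metis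
    have bnz: "snd (snd (ts!i)) \<noteq> 0" if "i < d" for i using wnz[OF that] d1 by (auto simp: wt_def)
    have ml: "\<forall>k<d. (\<Sum>i<d. wt d (ts!i) * lamt i ^ k) = (if k = d - 1 then 1 else 0)"
      using mom_low[OF m] len unfolding lamt_def by simp
    have wval: "wt d (ts!i) = 1 / Dp lamt d i" if i: "i < d" for i
    proof -
      define L where "L = (\<Prod>j\<in>{..<d}-{i}. [:-lamt j,1:])"
      have cd: "card ({..<d}-{i}) = d - 1" using i by simp
      have degL: "degree L = d - 1" and lcL: "lead_coeff L = 1"
        using prod_lin_deg[of "{..<d}-{i}" lamt] cd unfolding L_def by auto
      have pL: "poly L (lamt k) = (\<Prod>j\<in>{..<d}-{i}. (lamt k - lamt j))" for k
        unfolding L_def poly_prod by simp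
      have "(\<Sum>k<d. wt d (ts!k) * poly L (lamt k)) = coeff L (d-1)"
        by (rule functional[OF ml]) (use degL d1 in simp)
      also have "\<dots> = 1" using degL lcL by simp
      finally have e1: "(\<Sum>k<d. wt d (ts!k) * poly L (lamt k)) = 1" .
      have "(\<Sum>k<d. wt d (ts!k) * poly L (lamt k)) = wt d (ts!i) * poly L (lamt i) + (\<Sum>k\<in>{..<d}-{i}. wt d (ts!k) * poly L (lamt k))"
        using i by (subst sum.remove[of _ i]) auto
      also have "(\<Sum>k\<in>{..<d}-{i}. wt d (ts!k) * poly L (lamt k)) = 0"
        unfolding pL by (intro sum.neutral ballI) (auto intro!: prod_zero)
      finally have p1: "wt d (ts!i) * Dp lamt d i = 1" using e1 pL unfolding Dp_def by simp
      then have "Dp lamt d i \<noteq> 0" by auto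
      with p1 show ?thesis by (simp add: field_simps)
    qed
    have "\<alpha> = tgt d \<alpha> d" by (simp add: tgt_def)
    also have "\<dots> = mom d ts d" using m by simp
    also have "\<dots> = (\<Sum>i<d. lamt i ^ d / Dp lamt d i)"
      unfolding mom_def len
    proof (intro sum.cong refl)
      fix i assume "i \<in> {..<d}"
      then have i: "i < d" by simp
      have "fst (ts ! i) * fst (snd (ts ! i)) ^ d * snd (snd (ts ! i)) ^ (d - d) = wt d (ts!i) * lamt i ^ d"
        using bnz[OF i] unfolding wt_def lamt_def lt_def by (simp add: power_divide)
      then show "fst (ts ! i) * fst (snd (ts ! i)) ^ d * snd (snd (ts ! i)) ^ (d - d) = lamt i ^ d / Dp lamt d i"
        using wval[OF i] by simp
    qed
    also have "\<dots> = (\<Sum>i<d. lamt i)" using psum_top[OF inj d1] unfolding Dp_def .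
    finally have s: "(\<Sum>i<d. lamt i) = \<alpha>" by simp
    have me: "mset (map (rank_one_term d) ts) = mset (map (rank_one_term d) (tsof d lamt))"
    proof -
      have e: "map (\<lambda>i. ts!i) [0..<d] = ts" using len map_nth[of ts] by simp
      have "map (rank_one_term d) ts = map (rank_one_term d) (map (\<lambda>i. ts!i) [0..<d])"
        by (simp only: e)
      also have "\<dots> = map (\<lambda>i. rank_one_term d (ts!i)) [0..<d]" by simp
      also have "\<dots> = map (rank_one_term d) (tsof d lamt)"
        unfolding tsof_def map_map
      proof (intro map_cong refl)
        fix i assume "i \<in> set [0..<d]"
        then have i: "i < d" by simp
        show "rank_one_term d (ts ! i) = (rank_one_term d \<circ> (\<lambda>i. (1 / Dp lamt d i, lamt i, 1))) i"
        proof (intro ext)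
          fix x y
          obtain c a b where t: "ts!i = (c, a, b)" by (cases "ts!i") auto
          have b: "b \<noteq> 0" using bnz[OF i] t by simp
          have w: "c * b ^ d = 1 / Dp lamt d i" using wval[OF i] t by (simp add: wt_def)
          have la: "lamt i = a / b" using t by (simp add: lamt_def lt_def)
          have "a * x + b * y = b * (a / b * x + y)" using b by (simp add: field_simps)
          then have "c * (a * x + b * y) ^ d = (c * b ^ d) * (a / b * x + y) ^ d"
            by (simp add: power_mult_distrib)
          then show "rank_one_term d (ts ! i) x y = (rank_one_term d \<circ> (\<lambda>i. (1 / Dp lamt d i, lamt i, 1))) i x y"
            using w la t by (simp add: rank_one_term_def)
        qed
      qed
      finally show ?thesis by simp
    qed
    show "\<exists>lam :: nat \<Rightarrow> real. inj_on lam {..<d} \<and> (\<Sum>i<d. lam i) = \<alpha> \<and>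
          mset (map (rank_one_term d) ts) =
          image_mset (\<lambda>i. \<lambda>x y. (lam i * x + y) ^ d / (\<Prod>j\<in>{..<d} - {i}. (lam i - lam j)))
            (mset [0..<d])"
      using inj s me unfolding tsof_mset by blast
  next
    assume "\<exists>lam :: nat \<Rightarrow> real. inj_on lam {..<d} \<and> (\<Sum>i<d. lam i) = \<alpha> \<and>
          mset (map (rank_one_term d) ts) =
          image_mset (\<lambda>i. \<lambda>x y. (lam i * x + y) ^ d / (\<Prod>j\<in>{..<d} - {i}. (lam i - lam j)))
            (mset [0..<d])"
    then obtain lam where inj: "inj_on lam {..<d}" and s: "(\<Sum>i<d. lam i) = \<alpha>"
      and me: "mset (map (rank_one_term d) ts) = mset (map (rank_one_term d) (tsof d lam))"
      unfolding tsof_mset by blast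
    have dl: "is_sym_decomp d f (tsof d lam)" unfolding f_def by (rule tsof_decomp[OF d1 inj s])
    show "is_sym_decomp d f ts" unfolding is_sym_decomp_def
    proof (intro allI)
      fix x y
      have "f x y = (\<Sum>t\<leftarrow>tsof d lam. rank_one_term d t x y)" using dl unfolding is_sym_decomp_def by blast
      also have "\<dots> = (\<Sum>t\<leftarrow>ts. rank_one_term d t x y)" unfolding sum_via_mset me ..
      finally show "f x y = (\<Sum>t\<leftarrow>ts. rank_one_term d t x y)" .
    qed
  qed
  show ?thesis using rank iff unfolding f_def by blast
qed

end
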